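(* Let $k, m, s$ be positive integers with $m \geq 2$ and $s \leq k-2$, let $n = km$, let $B_1,\ldots,B_m$ be a partition of $[n]$ into blocks with $|B_i| = k$, choose $T_i \subset B_i$ with $|T_i| = s$ for each $i$, put $T = \bigcup_{i=1}^m T_i$, and let $\mathcal{F}$ be the union-closed family generated by $\{B_i \cup \{t\} : i \in [m],\ t \in T\}$. Then every member of $\mathcal{F}$ contains at least one block, and for each $j \in [m]$ the number $N_j$ of members of $\mathcal{F}$ containing exactly $j$ of the blocks $B_1,\ldots,B_m$ is $N_j = \binom{m}{j} 2^{(m-j)s}$; consequently $$|\mathcal{F}| = 2^{(m-1)s}\sum_{j=1}^m \binom{m}{j} 2^{-(j-1)s}.$$
   Context: $[n] = \{1,\ldots,n\}$. A family of sets is union-closed if it contains the union of any two of its members. The union-closed family generated by $\mathcal{G} \subset \mathcal{P}(X)$ is the smallest union-closed family of subsets of $X$ containing $\mathcal{G}$. *)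

theory Defs
  imports Complex_Main
begin

definition union_closed :: "'a set set \<Rightarrow> bool" where
  "union_closed F \<longleftrightarrow> (\<forall>A\<in>F. \<forall>B\<in>F. A \<union> B \<in> F)"

definition uc_generated :: "'a set \<Rightarrow> 'a set set \<Rightarrow> 'a set set" where
  "uc_generated X G = \<Inter>{F. F \<subseteq> Pow X \<and> G \<subseteq> F \<and> union_closed F}"

end

theory Submission
  imports Defs
begin

lemma uc_fin: "finite G \<Longrightarrow> G \<noteq> {} \<Longrightarrow> union_closed F \<Longrightarrow> G \<subseteq> F \<Longrightarrow> \<Union>G \<in> F"
proof (induction G rule: finite_ne_induct)
  case (singleton x) then show ?case by auto
next
  case (insert x G) then show ?case unfolding union_closed_def by auto
qed

theorem mainTheorem2:
  fixes k m s n :: nat and B T :: "nat \<Rightarrow> nat set" and \<F> :: "nat set set"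
  assumes "0 < k" and "0 < m" and "0 < s" and "m \<ge> 2" and "s \<le> k - 2"
    and "n = k * m"
    and "\<forall>i\<in>{1..m}. B i \<subseteq> {1..n} \<and> card (B i) = k"
    and "\<forall>i\<in>{1..m}. \<forall>i'\<in>{1..m}. i \<noteq> i' \<longrightarrow> B i \<inter> B i' = {}"
    and "(\<Union>i\<in>{1..m}. B i) = {1..n}"
    and "\<forall>i\<in>{1..m}. T i \<subseteq> B i \<and> card (T i) = s"
    and "\<F> = uc_generated {1..n} {B i \<union> {t} | i t. i \<in> {1..m} \<and> t \<in> (\<Union>l\<in>{1..m}. T l)}"
  shows "(\<forall>A\<in>\<F>. \<exists>i\<in>{1..m}. B i \<subseteq> A)
    \<and> (\<forall>j\<in>{1..m}. card {A\<in>\<F>. card {i\<in>{1..m}. B i \<subseteq> A} = j} = (m choose j) * 2 ^ ((m - j) * s))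
    \<and> real (card \<F>) = 2 ^ ((m - 1) * s) * (\<Sum>j=1..m. real (m choose j) * (1/2) ^ ((j - 1) * s))"
proof -
  define T0 where "T0 = (\<Union>l\<in>{1..m}. T l)"
  define R where "R = {(\<Union>i\<in>J. B i) \<union> S | J S. J \<subseteq> {1..m} \<and> J \<noteq> {} \<and> S \<subseteq> T0}"
  define G where "G = {B i \<union> {t} | i t. i \<in> {1..m} \<and> t \<in> T0}"
  have Bfin: "\<forall>i\<in>{1..m}. finite (B i)" using assms(7) finite_subset by blast
  have TB: "\<forall>i\<in>{1..m}. T0 \<inter> B i = T i"
  proof
    fix i assume i: "i \<in> {1..m}"
    show "T0 \<inter> B i = T i"
    proof
      show "T0 \<inter> B i \<subseteq> T i"
      proof
        fix x assume "x \<in> T0 \<inter> B i"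
        then obtain l where l: "l \<in> {1..m}" "x \<in> T l" "x \<in> B i" unfolding T0_def by auto
        have "l = i"
        proof (rule ccontr)
          assume "l \<noteq> i"
          then have "B l \<inter> B i = {}" using assms(8) l(1) i by blast
          moreover have "x \<in> B l" using assms(10) l by blast
          ultimately show False using l(3) by blast
        qed
        then show "x \<in> T i" using l by simp
      qed
      show "T i \<subseteq> T0 \<inter> B i" using i assms(10) unfolding T0_def by auto
    qed
  qed
  have T0sub: "T0 \<subseteq> {1..n}" using assms(7,10) unfolding T0_def by blast
  have blocks: "\<And>J S. J \<subseteq> {1..m} \<Longrightarrow> S \<subseteq> T0 \<Longrightarrow> {i\<in>{1..m}. B i \<subseteq> (\<Union>i\<in>J. B i) \<union> S} = J"
  proof -
    fix J S assume J: "J \<subseteq> {1..m}" and S: "S \<subseteq> T0"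
    show "{i\<in>{1..m}. B i \<subseteq> (\<Union>i\<in>J. B i) \<union> S} = J"
    proof
      show "J \<subseteq> {i\<in>{1..m}. B i \<subseteq> (\<Union>i\<in>J. B i) \<union> S}" using J by auto
      show "{i\<in>{1..m}. B i \<subseteq> (\<Union>i\<in>J. B i) \<union> S} \<subseteq> J"
      proof
        fix i assume "i \<in> {i\<in>{1..m}. B i \<subseteq> (\<Union>i\<in>J. B i) \<union> S}"
        then have i: "i \<in> {1..m}" and sub: "B i \<subseteq> (\<Union>i\<in>J. B i) \<union> S" by auto
        show "i \<in> J"
        proof (rule ccontr)
          assume "i \<notin> J"
          then have "\<forall>j\<in>J. B i \<inter> B j = {}" using assms(8) i J by (metis subsetD)
          then have "B i \<inter> (\<Union>i\<in>J. B i) = {}" by blast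
          then have "B i \<subseteq> T0 \<inter> B i" using sub S by blast
          moreover have "T0 \<inter> B i = T i" using TB i by blast
          ultimately have "B i \<subseteq> T i" by simp
          then have "card (B i) \<le> card (T i)" using card_mono Bfin assms(10) i finite_subset by metis
          then show False using assms(5,7,10,1,3) i by auto
        qed
      qed
    qed
  qed
  have Tfin: "finite T0" using T0sub finite_subset by blast
  have Rin: "\<And>J S. J \<subseteq> {1..m} \<Longrightarrow> J \<noteq> {} \<Longrightarrow> S \<subseteq> T0 \<Longrightarrow> (\<Union>i\<in>J. B i) \<union> S \<in> R"
    unfolding R_def by blast
  have RPow: "R \<subseteq> Pow {1..n}"
  proof
    fix X assume "X \<in> R"
    then obtain J S where h: "X = (\<Union>i\<in>J. B i) \<union> S" "J \<subseteq> {1..m}" "S \<subseteq> T0"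
      unfolding R_def by blast
    have "(\<Union>i\<in>J. B i) \<subseteq> {1..n}" using assms(7) h(2) by blast
    then show "X \<in> Pow {1..n}" using T0sub h by auto
  qed
  have FR: "\<F> = R"
  proof
    have "R \<in> {F. F \<subseteq> Pow {1..n} \<and> G \<subseteq> F \<and> union_closed F}"
    proof (intro CollectI conjI)
      show "R \<subseteq> Pow {1..n}" by (rule RPow)
      show "G \<subseteq> R"
      proof
        fix X assume "X \<in> G"
        then obtain i t where it: "X = B i \<union> {t}" "i \<in> {1..m}" "t \<in> T0" unfolding G_def by blast
        have "X = (\<Union>i\<in>{i}. B i) \<union> {t}" using it by simp
        then show "X \<in> R" using Rin[of "{i}" "{t}"] it by simp
      qed
      show "union_closed R" unfolding union_closed_def
      proof (intro ballI)
        fix X Y assume "X \<in> R" "Y \<in> R"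
        then obtain J1 S1 J2 S2 where h: "X = (\<Union>i\<in>J1. B i) \<union> S1" "J1 \<subseteq> {1..m}" "J1 \<noteq> {}" "S1 \<subseteq> T0"
           "Y = (\<Union>i\<in>J2. B i) \<union> S2" "J2 \<subseteq> {1..m}" "J2 \<noteq> {}" "S2 \<subseteq> T0" unfolding R_def by blast
        have "X \<union> Y = (\<Union>i\<in>J1 \<union> J2. B i) \<union> (S1 \<union> S2)" using h by auto
        then show "X \<union> Y \<in> R" using Rin[of "J1 \<union> J2" "S1 \<union> S2"] h by simp
      qed
    qed
    then show "\<F> \<subseteq> R" unfolding assms(11) uc_generated_def G_def[symmetric] T0_def[symmetric]
      by (rule Inter_lower)
    show "R \<subseteq> \<F>"
    proof
      fix X assume "X \<in> R"
      then obtain J S where h: "X = (\<Union>i\<in>J. B i) \<union> S" "J \<subseteq> {1..m}" "J \<noteq> {}" "S \<subseteq> T0"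
        unfolding R_def by blast
      obtain i0 where i0: "i0 \<in> J" using h(3) by blast
      define GG where "GG = (\<lambda>i. B i) ` J \<union> (\<lambda>t. B i0 \<union> {t}) ` S"
      have finJ: "finite J" using h(2) finite_subset by blast
      have finS: "finite S" using h(4) Tfin finite_subset by blast
      have GGfin: "finite GG" unfolding GG_def using finJ finS by blast
      have GGne: "GG \<noteq> {}" unfolding GG_def using i0 by blast
      have UGG: "\<Union>GG = X" unfolding GG_def h(1) using i0 by blast
      have GGG: "GG \<subseteq> G"
      proof
        fix Y assume "Y \<in> GG"
        then consider (a) i where "i \<in> J" "Y = B i" | (b) t where "t \<in> S" "Y = B i0 \<union> {t}"
          unfolding GG_def by blast
        then show "Y \<in> G"
        proof cases
          case a
          then have im: "i \<in> {1..m}" using h(2) by blast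
          then have "T i \<noteq> {}" using assms(3,10) by (metis card.empty less_irrefl)
          then obtain t where t: "t \<in> T i" by blast
          then have "t \<in> T0" unfolding T0_def using im by blast
          moreover have "Y = B i \<union> {t}" using a t assms(10) im by blast
          ultimately show ?thesis unfolding G_def using im by blast
        next
          case b
          then show ?thesis unfolding G_def using h(2,4) i0 by blast
        qed
      qed
      show "X \<in> \<F>" unfolding assms(11) uc_generated_def G_def[symmetric] T0_def[symmetric]
      proof (rule InterI)
        fix F assume "F \<in> {F. F \<subseteq> Pow {1..n} \<and> G \<subseteq> F \<and> union_closed F}"
        then have "union_closed F" "G \<subseteq> F" by auto
        then have "\<Union>GG \<in> F" using uc_fin[OF GGfin GGne] GGG by blast
        then show "X \<in> F" using UGG by simp
      qed
    qed
  qed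
  have part1: "\<forall>A\<in>\<F>. \<exists>i\<in>{1..m}. B i \<subseteq> A"
  proof
    fix A assume "A \<in> \<F>"
    then obtain J S where h: "A = (\<Union>i\<in>J. B i) \<union> S" "J \<subseteq> {1..m}" "J \<noteq> {}"
      unfolding FR R_def by blast
    then obtain i where "i \<in> J" by blast
    then show "\<exists>i\<in>{1..m}. B i \<subseteq> A" using h by blast
  qed
  define Fj where "Fj j = {A\<in>\<F>. card {i\<in>{1..m}. B i \<subseteq> A} = j}" for j
  have cardDiff: "card (T0 - (\<Union>i\<in>J. B i)) = (m - card J) * s" if J: "J \<subseteq> {1..m}" for J
  proof -
    have eq: "T0 - (\<Union>i\<in>J. B i) = (\<Union>l\<in>{1..m} - J. T l)"
    proof
      show "T0 - (\<Union>i\<in>J. B i) \<subseteq> (\<Union>l\<in>{1..m} - J. T l)"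
      proof
        fix x assume x: "x \<in> T0 - (\<Union>i\<in>J. B i)"
        then obtain l where l: "l \<in> {1..m}" "x \<in> T l" unfolding T0_def by blast
        have "x \<in> B l" using l assms(10) by blast
        then have "l \<notin> J" using x by blast
        then show "x \<in> (\<Union>l\<in>{1..m} - J. T l)" using l by blast
      qed
      show "(\<Union>l\<in>{1..m} - J. T l) \<subseteq> T0 - (\<Union>i\<in>J. B i)"
      proof
        fix x assume "x \<in> (\<Union>l\<in>{1..m} - J. T l)"
        then obtain l where l: "l \<in> {1..m}" "l \<notin> J" "x \<in> T l" by blast
        have xB: "x \<in> B l" using l assms(10) by blast
        have "x \<notin> B i" if "i \<in> J" for i
        proof -
          have "i \<noteq> l" using that l by blast
          then have "B l \<inter> B i = {}" using assms(8) l(1) that J by blast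
          then show ?thesis using xB by blast
        qed
        then show "x \<in> T0 - (\<Union>i\<in>J. B i)" unfolding T0_def using l by blast
      qed
    qed
    have "card (\<Union>l\<in>{1..m} - J. T l) = (\<Sum>l\<in>{1..m} - J. card (T l))"
    proof (rule card_UN_disjoint)
      show "finite ({1..m} - J)" by simp
      show "\<forall>i\<in>{1..m} - J. finite (T i)" using Bfin assms(10) finite_subset by blast
      show "\<forall>i\<in>{1..m} - J. \<forall>j\<in>{1..m} - J. i \<noteq> j \<longrightarrow> T i \<inter> T j = {}"
      proof (intro ballI impI)
        fix i j assume "i \<in> {1..m} - J" "j \<in> {1..m} - J" "i \<noteq> j"
        then have "B i \<inter> B j = {}" using assms(8) by blast
        moreover have "T i \<subseteq> B i" "T j \<subseteq> B j" using assms(10) \<open>i \<in> {1..m} - J\<close> \<open>j \<in> {1..m} - J\<close> by auto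
        ultimately show "T i \<inter> T j = {}" by blast
      qed
    qed
    also have "\<dots> = (\<Sum>l\<in>{1..m} - J. s)" using assms(10) by simp
    also have "\<dots> = card ({1..m} - J) * s" by simp
    also have "card ({1..m} - J) = m - card J" using J by (simp add: card_Diff_subset finite_subset)
    finally show ?thesis using eq by simp
  qed
  have Fjcard: "card (Fj j) = (m choose j) * 2 ^ ((m - j) * s)" if j: "j \<in> {1..m}" for j
  proof -
    define JJ where "JJ = {J. J \<subseteq> {1..m} \<and> card J = j}"
    define SS where "SS = (SIGMA J:JJ. Pow (T0 - (\<Union>i\<in>J. B i)))"
    define f where "f = (\<lambda>(J, S). (\<Union>i\<in>J. B i) \<union> (S::nat set))"
    have img: "Fj j = f ` SS"
    proof
      show "Fj j \<subseteq> f ` SS"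
      proof
        fix A assume "A \<in> Fj j"
        then have A: "A \<in> R" "card {i\<in>{1..m}. B i \<subseteq> A} = j" unfolding Fj_def FR by auto
        then obtain J S where h: "A = (\<Union>i\<in>J. B i) \<union> S" "J \<subseteq> {1..m}" "J \<noteq> {}" "S \<subseteq> T0"
          unfolding R_def by blast
        have "card J = j" using A(2) blocks[OF h(2,4)] h(1) by simp
        then have "(J, S - (\<Union>i\<in>J. B i)) \<in> SS" unfolding SS_def JJ_def using h by blast
        moreover have "A = f (J, S - (\<Union>i\<in>J. B i))" unfolding f_def h(1) by auto
        ultimately show "A \<in> f ` SS" by blast
      qed
      show "f ` SS \<subseteq> Fj j"
      proof
        fix A assume "A \<in> f ` SS"
        then obtain J S where h: "J \<subseteq> {1..m}" "card J = j" "S \<subseteq> T0 - (\<Union>i\<in>J. B i)"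
           "A = (\<Union>i\<in>J. B i) \<union> S" unfolding SS_def JJ_def f_def by blast
        have "J \<noteq> {}" using h(2) j by auto
        then have "A \<in> R" using Rin[of J S] h by blast
        moreover have "card {i\<in>{1..m}. B i \<subseteq> A} = j"
        proof -
          have "S \<subseteq> T0" using h(3) by blast
          then show ?thesis using blocks[OF h(1), of S] h by simp
        qed
        ultimately show "A \<in> Fj j" unfolding Fj_def by (simp add: FR)
      qed
    qed
    have inj: "inj_on f SS"
    proof (rule inj_onI)
      fix x y assume "x \<in> SS" "y \<in> SS" and fe: "f x = f y"
      obtain J S where x: "x = (J, S)" by (cases x)
      obtain J' S' where y: "y = (J', S')" by (cases y)
      have h: "x = (J, S)" "y = (J', S')" "J \<subseteq> {1..m}" "J' \<subseteq> {1..m}"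
        "S \<subseteq> T0 - (\<Union>i\<in>J. B i)" "S' \<subseteq> T0 - (\<Union>i\<in>J'. B i)"
        using \<open>x \<in> SS\<close> \<open>y \<in> SS\<close> x y unfolding SS_def JJ_def by auto
      have e: "(\<Union>i\<in>J. B i) \<union> S = (\<Union>i\<in>J'. B i) \<union> S'" using fe h unfolding f_def by simp
      have S1: "S \<subseteq> T0" and S2: "S' \<subseteq> T0" using h(5,6) by auto
      have "J = {i\<in>{1..m}. B i \<subseteq> (\<Union>i\<in>J. B i) \<union> S}" using blocks[OF h(3) S1] by simp
      also have "\<dots> = {i\<in>{1..m}. B i \<subseteq> (\<Union>i\<in>J'. B i) \<union> S'}" by (simp only: e)
      also have "\<dots> = J'" using blocks[OF h(4) S2] by simp
      finally have "J = J'" .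
      have "S = ((\<Union>i\<in>J. B i) \<union> S) - (\<Union>i\<in>J. B i)" using h(5) by blast
      also have "\<dots> = ((\<Union>i\<in>J'. B i) \<union> S') - (\<Union>i\<in>J'. B i)" using e \<open>J = J'\<close> by simp
      also have "\<dots> = S'" using h(6) by blast
      finally show "x = y" using h \<open>J = J'\<close> by simp
    qed
    have "card (Fj j) = card SS" using img inj card_image by metis
    also have "\<dots> = (\<Sum>J\<in>JJ. card (Pow (T0 - (\<Union>i\<in>J. B i))))"
      unfolding SS_def by (rule card_SigmaI) (auto simp: JJ_def Tfin)
    also have "\<dots> = (\<Sum>J\<in>JJ. 2 ^ ((m - j) * s))"
    proof (rule sum.cong)
      fix J assume "J \<in> JJ"
      then show "card (Pow (T0 - (\<Union>i\<in>J. B i))) = 2 ^ ((m - j) * s)"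
        using cardDiff Tfin unfolding JJ_def by (simp add: card_Pow)
    qed simp
    also have "\<dots> = card JJ * 2 ^ ((m - j) * s)" by simp
    also have "card JJ = m choose j" unfolding JJ_def using n_subsets[of "{1..m}" j] by simp
    finally show ?thesis .
  qed
  have part2: "\<forall>j\<in>{1..m}. card {A\<in>\<F>. card {i\<in>{1..m}. B i \<subseteq> A} = j} = (m choose j) * 2 ^ ((m - j) * s)"
    using Fjcard unfolding Fj_def by blast
  have Fun: "\<F> = (\<Union>j\<in>{1..m}. Fj j)"
  proof
    show "\<F> \<subseteq> (\<Union>j\<in>{1..m}. Fj j)"
    proof
      fix A assume A: "A \<in> \<F>"
      then obtain J S where h: "A = (\<Union>i\<in>J. B i) \<union> S" "J \<subseteq> {1..m}" "J \<noteq> {}" "S \<subseteq> T0"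
        unfolding FR R_def by blast
      have c: "card {i\<in>{1..m}. B i \<subseteq> A} = card J" using blocks[OF h(2,4)] h(1) by simp
      have "card J \<ge> 1" using h(2,3) finite_subset by (metis One_nat_def Suc_leI card_gt_0_iff finite_atLeastAtMost)
      moreover have "card J \<le> m" using h(2) card_mono[OF _ h(2)] by simp
      ultimately show "A \<in> (\<Union>j\<in>{1..m}. Fj j)" unfolding Fj_def using A c by auto
    qed
    show "(\<Union>j\<in>{1..m}. Fj j) \<subseteq> \<F>" unfolding Fj_def by blast
  qed
  have finF: "finite \<F>" unfolding FR using RPow finite_subset by (metis finite_Pow_iff finite_atLeastAtMost)
  have "card \<F> = (\<Sum>j\<in>{1..m}. card (Fj j))"
    unfolding Fun
  proof (rule card_UN_disjoint)
    show "finite {1..m}" by simp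
    show "\<forall>i\<in>{1..m}. finite (Fj i)" using finF unfolding Fj_def by simp
    show "\<forall>i\<in>{1..m}. \<forall>j\<in>{1..m}. i \<noteq> j \<longrightarrow> Fj i \<inter> Fj j = {}" unfolding Fj_def by blast
  qed
  then have "real (card \<F>) = (\<Sum>j\<in>{1..m}. real (m choose j) * 2 ^ ((m - j) * s))"
    using Fjcard by simp
  also have "\<dots> = (\<Sum>j=1..m. 2 ^ ((m - 1) * s) * (real (m choose j) * (1/2) ^ ((j - 1) * s)))"
  proof (rule sum.cong)
    fix j assume j: "j \<in> {1..m}"
    then have e: "(m - 1) * s = (m - j) * s + (j - 1) * s" by (simp add: add_mult_distrib[symmetric])
    have "(2::real) ^ ((m - 1) * s) * (1/2) ^ ((j - 1) * s) = 2 ^ ((m - j) * s) * (2 ^ ((j - 1) * s) * (1/2) ^ ((j - 1) * s))"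
      unfolding e power_add by simp
    also have "\<dots> = 2 ^ ((m - j) * s)" by (simp add: power_mult_distrib[symmetric])
    finally show "real (m choose j) * 2 ^ ((m - j) * s) = 2 ^ ((m - 1) * s) * (real (m choose j) * (1/2) ^ ((j - 1) * s))"
      by (metis mult.left_commute)
  qed simp
  also have "\<dots> = 2 ^ ((m - 1) * s) * (\<Sum>j=1..m. real (m choose j) * (1/2) ^ ((j - 1) * s))"
    by (simp add: sum_distrib_left)
  finally show ?thesis using part1 part2 by blast
qed

end
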